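(* Let $D\subset\mathbb{R}^2$ be a domain and $v\colon D\to\mathbb{R}^2$ a diffeomorphism onto its image. Let $s,\mu,\theta\colon[0,\infty)\to\mathbb{R}$ be $C^2$ functions satisfying $$\cosh^2(s(t))\,\mu'(t)-\sinh^2(s(t))\,\theta'(t)=\text{constant},$$ and let $A(t)=\psi(s(t),\mu(t),\theta(t))$, where $$\psi(s,\mu,\theta)=\cosh(s)\begin{pmatrix}\cos\mu&-\sin\mu\\ \sin\mu&\cos\mu\end{pmatrix}+\sinh(s)\begin{pmatrix}\cos\theta&\sin\theta\\ \sin\theta&-\cos\theta\end{pmatrix}.$$ Then $\varphi(t,\alpha)=A(t)v(\alpha)$ is a solution of the Lagrangian incompressible Euler problem on $D$.
   Context: Primes denote derivatives with respect to $t$. Note $\psi$ takes values in $\mathbb{SL}(2)$ (real $2\times2$ matrices of determinant $1$). For $\varphi(t,\alpha)=\varphi^t(\alpha)$, $d\varphi^t$ is the Jacobian in $\alpha$. "Solution of the Lagrangian incompressible Euler problem on $D$" means: each $\varphi^t$ is a diffeomorphism of $D$ onto its image, $\det(d\varphi^t)=\det(d\varphi^0)\ne0$ for all $t\ge0$, and there is a scalar function $p(t,\alpha)$ with $(d\varphi^t)^T\varphi''+\nabla_\alpha p=0$. *)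

theory Defs
  imports "HOL-Analysis.Analysis"
begin

definition domain2 :: "(real^2) set \<Rightarrow> bool" where
  "domain2 D \<longleftrightarrow> open D \<and> connected D \<and> D \<noteq> {}"

definition C1_on :: "(real^2) set \<Rightarrow> (real^2 \<Rightarrow> real^2) \<Rightarrow> bool" where
  "C1_on S f \<longleftrightarrow> (\<exists>f'. (\<forall>x\<in>S. (f has_derivative f' x) (at x))
                         \<and> continuous_on S (\<lambda>x. matrix (f' x)))"

definition diffeo_onto_image :: "(real^2 \<Rightarrow> real^2) \<Rightarrow> (real^2) set \<Rightarrow> bool" where
  "diffeo_onto_image f D \<longleftrightarrow> inj_on f D \<and> open (f ` D) \<and> C1_on D f \<and>
     (\<exists>g. (\<forall>x\<in>D. g (f x) = x) \<and> C1_on (f ` D) g)"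

definition C2_nonneg :: "(real \<Rightarrow> real) \<Rightarrow> bool" where
  "C2_nonneg f \<longleftrightarrow> (\<exists>f1 f2. (\<forall>t\<ge>0. (f has_real_derivative f1 t) (at t within {0..}) \<and>
                                   (f1 has_real_derivative f2 t) (at t within {0..}))
                           \<and> continuous_on {0..} f2)"

definition rot2 :: "real \<Rightarrow> real^2^2" where
  "rot2 m = vector [vector [cos m, - sin m], vector [sin m, cos m]]"

definition refl2 :: "real \<Rightarrow> real^2^2" where
  "refl2 th = vector [vector [cos th, sin th], vector [sin th, - cos th]]"

definition psi :: "real \<Rightarrow> real \<Rightarrow> real \<Rightarrow> real^2^2" where
  "psi s m th = cosh s *\<^sub>R rot2 m + sinh s *\<^sub>R refl2 th"

definition lagrangian_euler_solution :: "(real^2) set \<Rightarrow> (real \<Rightarrow> real^2 \<Rightarrow> real^2) \<Rightarrow> bool" where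
  "lagrangian_euler_solution D phi \<longleftrightarrow>
     (\<forall>t\<ge>0. diffeo_onto_image (phi t) D) \<and>
     (\<exists>J vel acc (p :: real \<Rightarrow> real^2 \<Rightarrow> real) g.
        (\<forall>t\<ge>0. \<forall>a\<in>D.
           (phi t has_derivative (\<lambda>h. J t a *v h)) (at a) \<and>
           det (J t a) = det (J 0 a) \<and> det (J 0 a) \<noteq> 0 \<and>
           ((\<lambda>\<tau>. phi \<tau> a) has_vector_derivative vel t a) (at t within {0..}) \<and>
           ((\<lambda>\<tau>. vel \<tau> a) has_vector_derivative acc t a) (at t within {0..}) \<and>
           (p t has_derivative (\<lambda>h. g t a \<bullet> h)) (at a) \<and>
           transpose (J t a) *v acc t a + g t a = 0))"

end

theory Submission imports Defs begin

lemma psi_entries: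
  "psi s m th $ 1 $ 1 = cosh s * cos m + sinh s * cos th"
  "psi s m th $ 1 $ 2 = - cosh s * sin m + sinh s * sin th"
  "psi s m th $ 2 $ 1 = cosh s * sin m + sinh s * sin th"
  "psi s m th $ 2 $ 2 = cosh s * cos m - sinh s * cos th"
  by (simp_all add: psi_def rot2_def refl2_def)

lemma psi_det: "det (psi s m th) = 1"
proof -
  have "det (psi s m th) = (cosh s)^2 * ((cos m)^2 + (sin m)^2) - (sinh s)^2 * ((cos th)^2 + (sin th)^2)"
    unfolding det_2 psi_entries by algebra
  also have "\<dots> = 1" by (simp add: cosh_square_eq)
  finally show ?thesis .
qed

lemma mv_deriv:
  fixes M :: "real \<Rightarrow> real^2^2"
  assumes "\<And>i j. ((\<lambda>\<tau>. M \<tau> $ i $ j) has_real_derivative M' $ i $ j) (at t within S)"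
  shows "((\<lambda>\<tau>. M \<tau> *v w) has_vector_derivative M' *v w) (at t within S)"
proof -
  have e: "\<And>\<tau>. M \<tau> *v w = (\<Sum>i\<in>UNIV. (\<Sum>j\<in>UNIV. M \<tau> $ i $ j * w $ j) *\<^sub>R axis i 1)"
    by (simp add: vec_eq_iff matrix_vector_mult_def axis_def sum_2 forall_2)
  have e2: "M' *v w = (\<Sum>i\<in>UNIV. (\<Sum>j\<in>UNIV. M' $ i $ j * w $ j) *\<^sub>R axis i 1)"
    by (simp add: vec_eq_iff matrix_vector_mult_def axis_def sum_2 forall_2)
  show ?thesis unfolding e e2
    by (auto intro!: derivative_eq_intros assms)
qed

lemma at_nonneg_nbot: "(t::real) \<ge> 0 \<Longrightarrow> at t within {0..} \<noteq> bot"
proof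
  assume "t \<ge> 0" "at t within {0..} = bot"
  moreover have "at_right t \<le> at t within {0..}"
    using \<open>t \<ge> 0\<close> by (intro at_le) auto
  ultimately show False using trivial_limit_at_right_real[of t] by (simp add: bot_unique)
qed

lemma time_part:
  fixes s \<mu> \<theta> \<mu>' \<theta>' :: "real \<Rightarrow> real"
  assumes "C2_nonneg s" and "C2_nonneg \<mu>" and "C2_nonneg \<theta>"
    and hm: "\<And>t. t \<ge> 0 \<Longrightarrow> (\<mu> has_real_derivative \<mu>' t) (at t within {0..})"
    and hq: "\<And>t. t \<ge> 0 \<Longrightarrow> (\<theta> has_real_derivative \<theta>' t) (at t within {0..})"
    and "\<exists>c. \<forall>t\<ge>0. (cosh (s t))\<^sup>2 * \<mu>' t - (sinh (s t))\<^sup>2 * \<theta>' t = c"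
  shows "\<exists>A1 A2. \<forall>t\<ge>0. \<forall>w.
     ((\<lambda>\<tau>. psi (s \<tau>) (\<mu> \<tau>) (\<theta> \<tau>) *v w) has_vector_derivative A1 t *v w) (at t within {0..}) \<and>
     ((\<lambda>\<tau>. A1 \<tau> *v w) has_vector_derivative A2 t *v w) (at t within {0..}) \<and>
     transpose (transpose (psi (s t) (\<mu> t) (\<theta> t)) ** A2 t) = transpose (psi (s t) (\<mu> t) (\<theta> t)) ** A2 t"
proof -
  obtain c where hc: "\<And>t. t \<ge> 0 \<Longrightarrow> (cosh (s t))\<^sup>2 * \<mu>' t - (sinh (s t))\<^sup>2 * \<theta>' t = c"
    using assms(6) by blast
  obtain s1 s2 where s12: "\<And>t. t \<ge> 0 \<Longrightarrow> (s has_real_derivative s1 t) (at t within {0..})"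
     "\<And>t. t \<ge> 0 \<Longrightarrow> (s1 has_real_derivative s2 t) (at t within {0..})"
    using assms(1) unfolding C2_nonneg_def by blast
  obtain m1 m2 where m12: "\<And>t. t \<ge> 0 \<Longrightarrow> (\<mu> has_real_derivative m1 t) (at t within {0..})"
     "\<And>t. t \<ge> 0 \<Longrightarrow> (m1 has_real_derivative m2 t) (at t within {0..})"
    using assms(2) unfolding C2_nonneg_def by blast
  obtain q1 q2 where q12: "\<And>t. t \<ge> 0 \<Longrightarrow> (\<theta> has_real_derivative q1 t) (at t within {0..})"
     "\<And>t. t \<ge> 0 \<Longrightarrow> (q1 has_real_derivative q2 t) (at t within {0..})"
    using assms(3) unfolding C2_nonneg_def by blast
  have mm: "\<mu>' t = m1 t" if "t \<ge> 0" for t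
    using has_field_derivative_unique[OF hm[OF that] m12(1)[OF that] at_nonneg_nbot[OF that]] .
  have qq: "\<theta>' t = q1 t" if "t \<ge> 0" for t
    using has_field_derivative_unique[OF hq[OF that] q12(1)[OF that] at_nonneg_nbot[OF that]] .
  define A where "A \<tau> = psi (s \<tau>) (\<mu> \<tau>) (\<theta> \<tau>)" for \<tau>
  define A1 :: "real \<Rightarrow> real^2^2" where "A1 \<tau> = vector [
     vector [sinh (s \<tau>) * s1 \<tau> * cos (\<mu> \<tau>) - cosh (s \<tau>) * sin (\<mu> \<tau>) * m1 \<tau>
             + cosh (s \<tau>) * s1 \<tau> * cos (\<theta> \<tau>) - sinh (s \<tau>) * sin (\<theta> \<tau>) * q1 \<tau>,
             - sinh (s \<tau>) * s1 \<tau> * sin (\<mu> \<tau>) - cosh (s \<tau>) * cos (\<mu> \<tau>) * m1 \<tau>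
             + cosh (s \<tau>) * s1 \<tau> * sin (\<theta> \<tau>) + sinh (s \<tau>) * cos (\<theta> \<tau>) * q1 \<tau>],
     vector [sinh (s \<tau>) * s1 \<tau> * sin (\<mu> \<tau>) + cosh (s \<tau>) * cos (\<mu> \<tau>) * m1 \<tau>
             + cosh (s \<tau>) * s1 \<tau> * sin (\<theta> \<tau>) + sinh (s \<tau>) * cos (\<theta> \<tau>) * q1 \<tau>,
             sinh (s \<tau>) * s1 \<tau> * cos (\<mu> \<tau>) - cosh (s \<tau>) * sin (\<mu> \<tau>) * m1 \<tau>
             - cosh (s \<tau>) * s1 \<tau> * cos (\<theta> \<tau>) + sinh (s \<tau>) * sin (\<theta> \<tau>) * q1 \<tau>]]" for \<tau>
  define A2 :: "real \<Rightarrow> real^2^2" where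
    "A2 t = (\<chi> i j. vector_derivative (\<lambda>\<tau>. A1 \<tau> $ i $ j) (at t within {0..}))" for t
  have dA: "((\<lambda>\<tau>. A \<tau> $ i $ j) has_real_derivative A1 t $ i $ j) (at t within {0..})"
    if "t \<ge> 0" for t i j
  proof -
    note d = s12(1)[OF that] m12(1)[OF that] q12(1)[OF that]
    have "\<forall>i j. ((\<lambda>\<tau>. A \<tau> $ i $ j) has_real_derivative A1 t $ i $ j) (at t within {0..})"
      unfolding forall_2 A_def psi_entries A1_def
      by (auto intro!: derivative_eq_intros d simp: algebra_simps)
    then show ?thesis by blast
  qed
  have dA1: "((\<lambda>\<tau>. A1 \<tau> $ i $ j) has_real_derivative A2 t $ i $ j) (at t within {0..})"
    if "t \<ge> 0" for t i j
  proof -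
    note d = s12[OF that] m12[OF that] q12[OF that]
    have "\<forall>i j. \<exists>D. ((\<lambda>\<tau>. A1 \<tau> $ i $ j) has_real_derivative D) (at t within {0..})"
      unfolding forall_2 A1_def
      by (simp, intro conjI; rule exI, (rule derivative_eq_intros d refl)+)
    then obtain D where "((\<lambda>\<tau>. A1 \<tau> $ i $ j) has_real_derivative D) (at t within {0..})"
      by blast
    then show ?thesis
      unfolding A2_def has_real_derivative_iff_has_vector_derivative
      by (simp add: vector_derivative_works[THEN iffD1, OF differentiableI_vector])
  qed
  define K where "K \<tau> = A \<tau> $1$2 * A1 \<tau> $1$1 + A \<tau> $2$2 * A1 \<tau> $2$1
       - A \<tau> $1$1 * A1 \<tau> $1$2 - A \<tau> $2$1 * A1 \<tau> $2$2" for \<tau>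
  have Kf: "K \<tau> = 2 * ((cosh (s \<tau>))\<^sup>2 * m1 \<tau> - (sinh (s \<tau>))\<^sup>2 * q1 \<tau>)" for \<tau>
  proof -
    have c1: "(cos (\<mu> \<tau>))\<^sup>2 + (sin (\<mu> \<tau>))\<^sup>2 = 1" "(cos (\<theta> \<tau>))\<^sup>2 + (sin (\<theta> \<tau>))\<^sup>2 = 1"
      by simp_all
    show ?thesis using c1 unfolding K_def A_def psi_entries A1_def
      by (simp; algebra)
  qed
  have sym: "(transpose (A t) ** A2 t) $ 1 $ 2 = (transpose (A t) ** A2 t) $ 2 $ 1" if "t \<ge> 0" for t
  proof -
    have "(K has_real_derivative
       A1 t $1$2 * A1 t $1$1 + A t $1$2 * A2 t $1$1 + (A1 t $2$2 * A1 t $2$1 + A t $2$2 * A2 t $2$1)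
       - (A1 t $1$1 * A1 t $1$2 + A t $1$1 * A2 t $1$2) - (A1 t $2$1 * A1 t $2$2 + A t $2$1 * A2 t $2$2))
       (at t within {0..})"
      unfolding K_def
      by (rule derivative_eq_intros dA dA1 that refl)+ (simp add: algebra_simps)
    moreover have "(K has_real_derivative 0) (at t within {0..})"
    proof (rule has_field_derivative_transform_within[OF _ zero_less_one])
      show "((\<lambda>_. 2 * c) has_real_derivative 0) (at t within {0..})" by simp
      show "t \<in> {0..}" using that by simp
      show "2 * c = K x" if "x \<in> {0..}" "dist x t < 1" for x
        using that hc[of x] mm[of x] qq[of x] by (simp add: Kf)
    qed
    ultimately have "A1 t $1$2 * A1 t $1$1 + A t $1$2 * A2 t $1$1 + (A1 t $2$2 * A1 t $2$1 + A t $2$2 * A2 t $2$1)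
       - (A1 t $1$1 * A1 t $1$2 + A t $1$1 * A2 t $1$2) - (A1 t $2$1 * A1 t $2$2 + A t $2$1 * A2 t $2$2) = 0"
      using has_field_derivative_unique at_nonneg_nbot[OF that] by blast
    then show ?thesis
      by (simp add: matrix_matrix_mult_def transpose_def sum_2 algebra_simps)
  qed
  show ?thesis
  proof (intro exI allI impI conjI)
    fix t w assume t: "(t::real) \<ge> 0"
    show "((\<lambda>\<tau>. psi (s \<tau>) (\<mu> \<tau>) (\<theta> \<tau>) *v w) has_vector_derivative A1 t *v w) (at t within {0..})"
      using mv_deriv[of A "A1 t", OF dA[OF t]] unfolding A_def .
    show "((\<lambda>\<tau>. A1 \<tau> *v w) has_vector_derivative A2 t *v w) (at t within {0..})"
      using mv_deriv[of A1 "A2 t", OF dA1[OF t]] .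
    show "transpose (transpose (psi (s t) (\<mu> t) (\<theta> t)) ** A2 t) = transpose (psi (s t) (\<mu> t) (\<theta> t)) ** A2 t"
      using sym[OF t] unfolding A_def[symmetric]
      by (simp add: vec_eq_iff forall_2 transpose_def)
  qed
qed

lemma cont_lmul: "continuous_on S f \<Longrightarrow> continuous_on S (\<lambda>x. (B::real^2^2) ** f x)"
  unfolding matrix_matrix_mult_def by (intro continuous_intros)

lemma cont_rmul: "continuous_on S f \<Longrightarrow> continuous_on S (\<lambda>x. f x ** (B::real^2^2))"
  unfolding matrix_matrix_mult_def by (intro continuous_intros)

lemma matrix_lmul: "linear (f::real^2\<Rightarrow>real^2) \<Longrightarrow> matrix (\<lambda>h. B *v f h) = B ** matrix f"
proof -
  assume l: "linear f"
  have "linear (\<lambda>h. B *v f h)"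
    using linear_compose[OF l matrix_vector_mul_linear] by (simp add: o_def)
  then show ?thesis using l by (simp add: matrix_eq matrix_works flip: matrix_vector_mul_assoc)
qed

lemma matrix_rmul: "linear (f::real^2\<Rightarrow>real^2) \<Longrightarrow> matrix (\<lambda>h. f (B *v h)) = matrix f ** B"
proof -
  assume l: "linear f"
  have "linear (\<lambda>h. f (B *v h))"
    using linear_compose[OF matrix_vector_mul_linear l] by (simp add: o_def)
  then show ?thesis using l by (simp add: matrix_eq matrix_works flip: matrix_vector_mul_assoc)
qed

definition adj2 :: "real^2^2 \<Rightarrow> real^2^2" where
  "adj2 B = vector [vector [B$2$2, - B$1$2], vector [- B$2$1, B$1$1]]"

lemma adj2_inv: assumes "det B = 1"
  shows "adj2 B ** B = mat 1" "B ** adj2 B = mat 1"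
  using assms
  by (simp_all add: adj2_def det_2 vec_eq_iff forall_2 matrix_matrix_mult_def sum_2 mat_def algebra_simps)

lemma diffeo_lin:
  assumes v: "diffeo_onto_image v D" and B: "det B = 1"
  shows "diffeo_onto_image (\<lambda>a. B *v v a) D"
proof -
  obtain v' where v': "\<And>x. x \<in> D \<Longrightarrow> (v has_derivative v' x) (at x)"
    and vc: "continuous_on D (\<lambda>x. matrix (v' x))"
    using v unfolding diffeo_onto_image_def C1_on_def by blast
  obtain g g' where gv: "\<And>x. x \<in> D \<Longrightarrow> g (v x) = x"
     and g': "\<And>y. y \<in> v ` D \<Longrightarrow> (g has_derivative g' y) (at y)"
     and gc: "continuous_on (v ` D) (\<lambda>y. matrix (g' y))"
    using v unfolding diffeo_onto_image_def C1_on_def by blast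
  have inj: "inj_on v D" and op: "open (v ` D)" using v unfolding diffeo_onto_image_def by auto
  define C where "C = adj2 B"
  have CB: "C *v (B *v x) = x" for x using adj2_inv[OF B] by (simp add: C_def matrix_vector_mul_assoc)
  have BC: "B *v (C *v x) = x" for x using adj2_inv[OF B] by (simp add: C_def matrix_vector_mul_assoc)
  have img: "(\<lambda>a. B *v v a) ` D = (\<lambda>y. B *v y) ` (v ` D)" by auto
  have "inj_on (\<lambda>a. B *v v a) D"
    using inj unfolding inj_on_def by (metis CB)
  moreover have "open ((\<lambda>a. B *v v a) ` D)"
    unfolding img
  proof (rule open_surjective_linear_image[OF op matrix_vector_mul_linear])
    show "surj ((*v) B)" by (metis BC surjI)
  qed
  moreover have "C1_on D (\<lambda>a. B *v v a)"
    unfolding C1_on_def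
  proof (intro exI conjI ballI)
    fix x assume x: "x \<in> D"
    show "((\<lambda>a. B *v v a) has_derivative (\<lambda>h. B *v v' x h)) (at x)"
      by (rule bounded_linear.has_derivative[OF matrix_vector_mul_bounded_linear v'[OF x]])
  next
    have "continuous_on D (\<lambda>x. B ** matrix (v' x))" by (rule cont_lmul[OF vc])
    moreover have "matrix (\<lambda>h. B *v v' x h) = B ** matrix (v' x)" if "x \<in> D" for x
      using v'[OF that] by (simp add: matrix_lmul has_derivative_linear)
    ultimately show "continuous_on D (\<lambda>x. matrix (\<lambda>h. B *v v' x h))"
      by (metis (no_types, lifting) continuous_on_cong)
  qed
  moreover have "\<exists>g2. (\<forall>x\<in>D. g2 (B *v v x) = x) \<and> C1_on ((\<lambda>a. B *v v a) ` D) g2"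
  proof (intro exI conjI ballI)
    fix x assume "x \<in> D" then show "g (C *v (B *v v x)) = x" by (simp add: CB gv)
  next
    show "C1_on ((\<lambda>a. B *v v a) ` D) (\<lambda>y. g (C *v y))"
      unfolding C1_on_def
    proof (intro exI conjI ballI)
      fix y assume "y \<in> (\<lambda>a. B *v v a) ` D"
      then have y: "C *v y \<in> v ` D" by (auto simp: CB)
      have "((\<lambda>y. g (C *v y)) has_derivative (g' (C *v y) \<circ> (\<lambda>h. C *v h))) (at y)"
        using diff_chain_at[OF matrix_vector_mul_bounded_linear[THEN bounded_linear_imp_has_derivative] g'[OF y]]
        by (simp add: o_def)
      then show "((\<lambda>y. g (C *v y)) has_derivative (\<lambda>h. g' (C *v y) (C *v h))) (at y)"
        by (simp add: o_def)
    next
      have "continuous_on ((\<lambda>a. B *v v a) ` D) (\<lambda>y. matrix (g' (C *v y)) ** C)"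
      proof (rule cont_rmul, rule continuous_on_compose2[OF gc])
        show "continuous_on ((\<lambda>a. B *v v a) ` D) ((*v) C)"
          by (intro linear_continuous_on matrix_vector_mul_bounded_linear)
        show "(*v) C ` (\<lambda>a. B *v v a) ` D \<subseteq> v ` D" by (auto simp: CB)
      qed
      moreover have "matrix (\<lambda>h. g' (C *v y) (C *v h)) = matrix (g' (C *v y)) ** C"
        if "y \<in> (\<lambda>a. B *v v a) ` D" for y
      proof -
        have yy: "C *v y \<in> v ` D" using that by (auto simp: CB)
        show ?thesis by (rule matrix_rmul[OF has_derivative_linear[OF g'[OF yy]]])
      qed
      ultimately show "continuous_on ((\<lambda>a. B *v v a) ` D) (\<lambda>y. matrix (\<lambda>h. g' (C *v y) (C *v h)))"
        by (metis (no_types, lifting) continuous_on_cong)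
    qed
  qed
  ultimately show ?thesis unfolding diffeo_onto_image_def by blast
qed

lemma diffeo_det:
  assumes v: "diffeo_onto_image v D" and D: "open D" and x: "x \<in> D"
    and v': "(v has_derivative v') (at x)"
  shows "det (matrix v') \<noteq> 0"
proof -
  obtain g g' where gv: "\<And>x. x \<in> D \<Longrightarrow> g (v x) = x"
     and g': "\<And>y. y \<in> v ` D \<Longrightarrow> (g has_derivative g' y) (at y)"
    using v unfolding diffeo_onto_image_def C1_on_def by blast
  have c: "(g \<circ> v has_derivative g' (v x) \<circ> v') (at x)"
    using diff_chain_at[OF v' g'] x by blast
  have "(g \<circ> v has_derivative (\<lambda>h. h)) (at x)"
    by (rule has_derivative_transform_within_open[OF has_derivative_ident D x])
       (simp add: gv)
  hence e: "g' (v x) \<circ> v' = (\<lambda>h. h)" using has_derivative_unique[OF c] by simp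
  have "matrix (g' (v x)) ** matrix v' = mat 1"
    using matrix_compose[OF has_derivative_linear[OF v'] has_derivative_linear[OF g'[of "v x"]]] x e
    by (simp add: matrix_id_mat_1[unfolded id_def])
  hence "det (matrix (g' (v x))) * det (matrix v') = 1" by (metis det_I det_mul)
  thus ?thesis by auto
qed

theorem theorem4p2:
  fixes D :: "(real^2) set" and v :: "real^2 \<Rightarrow> real^2"
    and s \<mu> \<theta> \<mu>' \<theta>' :: "real \<Rightarrow> real"
  assumes "domain2 D"
    and "diffeo_onto_image v D"
    and "C2_nonneg s" and "C2_nonneg \<mu>" and "C2_nonneg \<theta>"
    and "\<And>t. t \<ge> 0 \<Longrightarrow> (\<mu> has_real_derivative \<mu>' t) (at t within {0..})"
    and "\<And>t. t \<ge> 0 \<Longrightarrow> (\<theta> has_real_derivative \<theta>' t) (at t within {0..})"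
    and "\<exists>c. \<forall>t\<ge>0. (cosh (s t))\<^sup>2 * \<mu>' t - (sinh (s t))\<^sup>2 * \<theta>' t = c"
  shows "lagrangian_euler_solution D (\<lambda>t a. psi (s t) (\<mu> t) (\<theta> t) *v v a)"
proof -
  define A where "A t = psi (s t) (\<mu> t) (\<theta> t)" for t
  obtain A1 A2 where TP: "\<And>t w. t \<ge> 0 \<Longrightarrow>
     ((\<lambda>\<tau>. A \<tau> *v w) has_vector_derivative A1 t *v w) (at t within {0..}) \<and>
     ((\<lambda>\<tau>. A1 \<tau> *v w) has_vector_derivative A2 t *v w) (at t within {0..}) \<and>
     transpose (transpose (A t) ** A2 t) = transpose (A t) ** A2 t"
    using time_part[OF assms(3-8)] unfolding A_def by blast
  have D: "open D" using assms(1) unfolding domain2_def by blast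
  obtain v' where v': "\<And>x. x \<in> D \<Longrightarrow> (v has_derivative v' x) (at x)"
    using assms(2) unfolding diffeo_onto_image_def C1_on_def by blast
  define M where "M t = transpose (A t) ** A2 t" for t
  define J where "J t a = A t ** matrix (v' a)" for t a
  define vel where "vel t a = A1 t *v v a" for t a
  define acc where "acc t a = A2 t *v v a" for t a
  define p where "p t a = - (1/2) * (v a \<bullet> (M t *v v a))" for t a
  define g where "g t a = - (transpose (matrix (v' a)) *v (M t *v v a))" for t a
  have part1: "\<forall>t\<ge>0. diffeo_onto_image (\<lambda>a. psi (s t) (\<mu> t) (\<theta> t) *v v a) D"
    using diffeo_lin[OF assms(2) psi_det] by blast
  have part2: "((\<lambda>a. A t *v v a) has_derivative (\<lambda>h. J t a *v h)) (at a) \<and>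
           det (J t a) = det (J 0 a) \<and> det (J 0 a) \<noteq> 0 \<and>
           ((\<lambda>\<tau>. A \<tau> *v v a) has_vector_derivative vel t a) (at t within {0..}) \<and>
           ((\<lambda>\<tau>. vel \<tau> a) has_vector_derivative acc t a) (at t within {0..}) \<and>
           (p t has_derivative (\<lambda>h. g t a \<bullet> h)) (at a) \<and>
           transpose (J t a) *v acc t a + g t a = 0"
    if t: "t \<ge> 0" and a: "a \<in> D" for t a
  proof (intro conjI)
    have lin: "linear (v' a)" using has_derivative_linear[OF v'[OF a]] .
    have "((\<lambda>a. A t *v v a) has_derivative (\<lambda>h. A t *v v' a h)) (at a)"
      by (rule bounded_linear.has_derivative[OF matrix_vector_mul_bounded_linear v'[OF a]])
    moreover have "(\<lambda>h. A t *v v' a h) = (\<lambda>h. J t a *v h)"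
      using lin by (simp add: J_def matrix_works flip: matrix_vector_mul_assoc)
    ultimately show "((\<lambda>a. A t *v v a) has_derivative (\<lambda>h. J t a *v h)) (at a)" by simp
    show "det (J t a) = det (J 0 a)" by (simp add: J_def det_mul A_def psi_det)
    show "det (J 0 a) \<noteq> 0" using diffeo_det[OF assms(2) D a v'[OF a]]
      by (simp add: J_def det_mul A_def psi_det)
    show "((\<lambda>\<tau>. A \<tau> *v v a) has_vector_derivative vel t a) (at t within {0..})"
      using TP[OF t] by (simp add: vel_def)
    show "((\<lambda>\<tau>. vel \<tau> a) has_vector_derivative acc t a) (at t within {0..})"
      using TP[OF t] by (simp add: vel_def acc_def)
    have sym: "M t $ 1 $ 2 = M t $ 2 $ 1"
      using TP[OF t, of 0] unfolding M_def[symmetric]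
      by (metis (no_types, lifting) transpose_def vec_lambda_beta)
    have "(p t has_derivative (\<lambda>h. - (1/2) * (v a \<bullet> (M t *v v' a h) + v' a h \<bullet> (M t *v v a)))) (at a)"
    proof -
      have h1: "((\<lambda>b. M t *v v b) has_derivative (\<lambda>h. M t *v v' a h)) (at a)"
        by (rule bounded_linear.has_derivative[OF matrix_vector_mul_bounded_linear v'[OF a]])
      have h2: "((\<lambda>b. v b \<bullet> (M t *v v b)) has_derivative
          (\<lambda>h. v a \<bullet> (M t *v v' a h) + v' a h \<bullet> (M t *v v a))) (at a)"
        by (rule has_derivative_inner[OF v'[OF a] h1])
      show ?thesis unfolding p_def
        by (rule has_derivative_mult_right[OF h2])
    qed
    moreover have "(\<lambda>h. - (1/2) * (v a \<bullet> (M t *v v' a h) + v' a h \<bullet> (M t *v v a))) = (\<lambda>h. g t a \<bullet> h)"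
    proof
      fix h
      have vh: "v' a h = matrix (v' a) *v h" using lin by (simp add: matrix_works)
      show "- (1/2) * (v a \<bullet> (M t *v v' a h) + v' a h \<bullet> (M t *v v a)) = g t a \<bullet> h"
        unfolding vh g_def using sym
        by (simp add: inner_vec_def sum_2 matrix_vector_mult_def transpose_def algebra_simps)
    qed
    ultimately show "(p t has_derivative (\<lambda>h. g t a \<bullet> h)) (at a)" by simp
    show "transpose (J t a) *v acc t a + g t a = 0"
      by (simp add: J_def acc_def g_def M_def matrix_transpose_mul matrix_vector_mul_assoc matrix_mul_assoc)
  qed
  show ?thesis
    unfolding lagrangian_euler_solution_def
  proof (intro conjI exI allI impI ballI)
    show "\<And>t. 0 \<le> t \<Longrightarrow> diffeo_onto_image (\<lambda>a. psi (s t) (\<mu> t) (\<theta> t) *v v a) D"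
      using part1 by blast
    fix t a assume t: "(t::real) \<ge> 0" and a: "a \<in> D"
    note P = part2[OF t a, unfolded A_def]
    show "((\<lambda>a. psi (s t) (\<mu> t) (\<theta> t) *v v a) has_derivative (\<lambda>h. J t a *v h)) (at a)"
      using P by blast
    show "det (J t a) = det (J 0 a)" using P by blast
    show "det (J 0 a) \<noteq> 0" using P by blast
    show "((\<lambda>\<tau>. psi (s \<tau>) (\<mu> \<tau>) (\<theta> \<tau>) *v v a) has_vector_derivative vel t a) (at t within {0..})"
      using P by blast
    show "((\<lambda>\<tau>. vel \<tau> a) has_vector_derivative acc t a) (at t within {0..})" using P by blast
    show "(p t has_derivative (\<lambda>h. g t a \<bullet> h)) (at a)" using P by blast
    show "transpose (J t a) *v acc t a + g t a = 0" using P by blast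
  qed
qed
end
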